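(* Let $L_1,L_2\in(0,\infty]$, not both equal to $\infty$, and $\mu_1,\mu_2\in\mathbb{R}$ with $\mu_1<L_1$, $\mu_2<L_2$, and assume $\mu_1+\mu_2>0$ or $\mu_1=\mu_2=0$. Let $f_1\in\mathcal{F}_{\mu_1,L_1}$, $f_2\in\mathcal{F}_{\mu_2,L_2}$, with $F=f_1-f_2$ bounded below. Let $x\in\mathbb{R}^d$, let $x^+$ be obtained by one DCA iteration from $x$ with selected subgradient $g_2\in\partial f_2(x)$, let $g_1^+:=g_2\in\partial f_1(x^+)$, and let $g_1\in\partial f_1(x)$ and $g_2^+\in\partial f_2(x^+)$ be arbitrary. Write $S_1:=\mu_1^{-1}+\mu_2^{-1}+L_2^{-1}$ and $S_2:=\mu_1^{-1}+\mu_2^{-1}+L_1^{-1}$. For each $i\in\{1,\dots,8\}$, if $(L_1,L_2,\mu_1,\mu_2)$ lies in the domain $D_i$ below, then $$F(x)-F(x^+)\ \ge\ \frac{\sigma_i}{2}\|g_1-g_2\|^2+\frac{\sigma_i^+}{2}\|g_1^+-g_2^+\|^2,$$ with $\sigma_i,\sigma_i^+\ge 0$ given by: (1) $D_1$: $L_1\ge L_2>\mu_1\ge 0$ and either $\mu_2\ge 0$, or [$\mu_1>-\mu_2>0$ and $S_1\le L_1^{-1}(2+L_2/\mu_2)$]; $\sigma_1=\frac{L_2-\mu_1}{L_2(L_1-\mu_1)}$, $\sigma_1^+=\frac{1}{L_2}\Big(1+\frac{\mu_1(L_1-L_2)}{L_2(L_1-\mu_1)}\Big)$. (2) $D_2$: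 $L_2\ge L_1>\mu_2\ge 0$ and either $\mu_1\ge 0$, or [$\mu_2>-\mu_1>0$ and $S_2\le L_2^{-1}(2+L_1/\mu_1)$]; $\sigma_2=\frac{1}{L_1}\Big(1+\frac{\mu_2(L_2-L_1)}{L_1(L_2-\mu_2)}\Big)$, $\sigma_2^+=\frac{L_1-\mu_2}{L_1(L_2-\mu_2)}$. (3) $D_3$: $\mu_1>-\mu_2>0$, $L_2>\mu_1$, $L_1>\mu_2$, and $L_1^{-1}(2+L_2/\mu_2)\le S_1\le 0$; $\sigma_3=\frac{L_1^{-1}S_1}{S_1-L_1^{-1}}$, $\sigma_3^+=\frac{1}{L_2+\mu_2}$. (4) $D_4$: $\mu_2>-\mu_1>0$, $L_2>\mu_1$, $L_1>\mu_2$, and $L_2^{-1}(2+L_1/\mu_1)\le S_2\le 0$; $\sigma_4=\frac{1}{L_1+\mu_1}$, $\sigma_4^+=\frac{L_2^{-1}S_2}{S_2-L_2^{-1}}$. (5) $D_5$: $\mu_1>-\mu_2>0$, $L_1>\mu_2$, and $\max\{L_1^{-1}(2+L_2/\mu_2),0\}<S_1$; $\sigma_5=0$, $\sigma_5^+=\frac{\mu_1+\mu_2}{\mu_2^2}$. (6) $D_6$: $\mu_2>-\mu_1>0$, $L_2>\mu_1$, and $\max\{L_2^{-1}(2+L_1/\mu_1),0\}<S_2$; $\sigma_6=\frac{\mu_1+\mu_2}{\mu_1^2}$, $\sigma_6^+=0$. (7) $D_7$: $L_1>\mu_1>L_2>0$ and either $\mu_2\ge 0$ or [$\mu_2<0$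 and $S_1\le 0$]; $\sigma_7=0$, $\sigma_7^+=\frac{L_2+\mu_1}{L_2^2}$. (8) $D_8$: $L_2>\mu_2>L_1>0$ and either $\mu_1\ge 0$ or [$\mu_1<0$ and $S_2\le 0$]; $\sigma_8=\frac{L_1+\mu_2}{L_1^2}$, $\sigma_8^+=0$. Whenever $L_1$ or $L_2$ equals $\infty$, all expressions above are interpreted as their limits as that parameter tends to $+\infty$ (in particular $1/\infty=0$).
   Context: For $L\in(0,\infty]$ and $\mu<L$, $\mathcal{F}_{\mu,L}=\mathcal{F}_{\mu,L}(\mathbb{R}^d)$ denotes the class of proper lower semicontinuous functions $f:\mathbb{R}^d\to\mathbb{R}$ such that $f-\frac{\mu}{2}\|\cdot\|^2$ is convex and, if $L<\infty$, also $\frac{L}{2}\|\cdot\|^2-f$ is convex (for $L=\infty$ only the first condition is imposed). A function in $\mathcal{F}_{\mu,L}$ with $L<\infty$ is called smooth. Subdifferential: for convex $f$, $\partial f(x)=\{g:\ f(y)\ge f(x)+\langle g,y-x\rangle\ \forall y\}$; for $f\in\mathcal{F}_{\mu,L}$ with $\mu<0$, $\partial f(x):=\{g-\mu x:\ g\in\partial\tilde f(x)\}$ where $\tilde f=f-\frac{\mu}{2}\|\cdot\|^2$ is convex; if $f$ is differentiable at $x$ then $\partial f(x)=\{\nabla f(x)\}$. One DCA iteration from $x$: select $g_2\in\partial f_2(x)$, then select $x^+\in\arg\min_{w\in\mathbb{R}^d}\{f_1(w)-\langle g_2,w\rangle\}$ (assumed to exist); the optimality condition gives $g_2\in\partial f_1(x^+)$.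 *)

theory Defs
  imports "HOL-Analysis.Analysis" "HOL-Library.Extended_Real"
begin

definition lsc :: "('a::topological_space \<Rightarrow> real) \<Rightarrow> bool" where
  "lsc f \<longleftrightarrow> (\<forall>c. closed {x. f x \<le> c})"

definition Fclass :: "real \<Rightarrow> ereal \<Rightarrow> ('a::euclidean_space \<Rightarrow> real) \<Rightarrow> bool" where
  "Fclass \<mu> L f \<longleftrightarrow> lsc f \<and>
     convex_on UNIV (\<lambda>x. f x - \<mu> / 2 * (norm x)^2) \<and>
     (L \<noteq> \<infinity> \<longrightarrow> convex_on UNIV (\<lambda>x. real_of_ereal L / 2 * (norm x)^2 - f x))"

definition cvx_subdiff :: "('a::real_inner \<Rightarrow> real) \<Rightarrow> 'a \<Rightarrow> 'a set" where
  "cvx_subdiff f x = {g. \<forall>y. f y \<ge> f x + inner g (y - x)}"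

definition subdiff :: "real \<Rightarrow> ('a::real_inner \<Rightarrow> real) \<Rightarrow> 'a \<Rightarrow> 'a set" where
  "subdiff \<mu> f x =
     (if \<mu> < 0 then {g + \<mu> *\<^sub>R x | g. g \<in> cvx_subdiff (\<lambda>y. f y - \<mu> / 2 * (norm y)^2) x}
      else cvx_subdiff f x)"

definition lim_ext :: "(real \<Rightarrow> real \<Rightarrow> real) \<Rightarrow> ereal \<Rightarrow> ereal \<Rightarrow> real" where
  "lim_ext \<phi> L1 L2 =
     (if L1 = \<infinity> then Lim at_top (\<lambda>t. \<phi> t (real_of_ereal L2))
      else if L2 = \<infinity> then Lim at_top (\<lambda>t. \<phi> (real_of_ereal L1) t)
      else \<phi> (real_of_ereal L1) (real_of_ereal L2))"

end

theory Submission
  imports Defs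
begin

lemma conv_step:
  fixes k :: "'a::real_vector \<Rightarrow> real"
  assumes "convex_on UNIV k" "0 \<le> t" "t \<le> 1"
  shows "k (y + t *\<^sub>R v) \<le> (1-t) * k y + t * k (y + v)"
proof -
  have "(1 - t) *\<^sub>R y + t *\<^sub>R (y + v) = y + t *\<^sub>R v" by (simp add: algebra_simps)
  with convex_onD[OF assms(1) assms(2,3), of y "y+v"] show ?thesis by simp
qed

lemma core_lim:
  fixes k :: "'a::real_vector \<Rightarrow> real"
  assumes cv: "convex_on UNIV k" and C: "C \<ge> 0"
    and h: "\<And>t. 0 < t \<Longrightarrow> t \<le> 1 \<Longrightarrow> k (y + t *\<^sub>R v) - k y \<ge> t * a - C * t^2"
  shows "k (y + v) - k y \<ge> a"
proof (rule ccontr)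
  assume neg: "\<not> ?thesis"
  define \<delta> where "\<delta> = a - (k (y + v) - k y)"
  have dp: "\<delta> > 0" using neg unfolding \<delta>_def by simp
  define t where "t = min 1 (\<delta> / (2*C+1))"
  have t0: "0 < t" using dp C unfolding t_def by simp
  have t1: "t \<le> 1" unfolding t_def by simp
  have tC: "C * t < \<delta>"
  proof -
    have "t \<le> \<delta> / (2*C+1)" unfolding t_def by simp
    hence "C * t \<le> C * (\<delta> / (2*C+1))" using C by (rule mult_left_mono)
    also have "\<dots> < \<delta>"
    proof -
      have "C * (\<delta> / (2*C+1)) = \<delta> * (C / (2*C+1))" by simp
      moreover have "C / (2*C+1) < 1" using C by simp
      ultimately show ?thesis using dp by (metis mult.right_neutral mult_strict_left_mono)
    qed
    finally show ?thesis .
  qed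
  have "k (y + t *\<^sub>R v) \<le> (1-t) * k y + t * k (y + v)" using conv_step[OF cv] t0 t1 by simp
  with h[OF t0 t1] have "t * a - C * t^2 \<le> t * (k (y+v) - k y)" by (simp add: algebra_simps)
  hence "t * (a - C * t) \<le> t * (k (y+v) - k y)" by (simp add: algebra_simps power2_eq_square)
  hence "a - C * t \<le> k (y+v) - k y" using t0 by simp
  with tC show False unfolding \<delta>_def by simp
qed

lemma lowerA:
  fixes k :: "'a::real_inner \<Rightarrow> real"
  assumes cv: "convex_on UNIV k" and c: "c \<ge> 0"
    and h: "\<And>z. k z \<ge> k y + inner a (z - y) - c/2 * (norm (z - y))^2"
  shows "k z \<ge> k y + inner a (z - y)"
proof -
  have "k (y + (z - y)) - k y \<ge> inner a (z - y)"
  proof (rule core_lim[OF cv, where C = "c/2 * (norm (z-y))^2"])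
    show "0 \<le> c/2 * (norm (z-y))^2" using c by simp
    fix t :: real assume t: "0 < t" "t \<le> 1"
    let ?w = "t *\<^sub>R (z-y)"
    have hh: "k (y + ?w) \<ge> k y + inner a ?w - c/2 * (norm ?w)^2"
      using h[of "y + ?w"] by simp
    have e1: "inner a ?w = t * inner a (z-y)" by simp
    have e2: "c/2 * (norm ?w)^2 = c/2 * (norm (z-y))^2 * t^2" using t by (simp add: power_mult_distrib)
    show "k (y + ?w) - k y \<ge> t * inner a (z-y) - c/2 * (norm (z-y))^2 * t^2"
      using hh e1 e2 by linarith
  qed
  thus ?thesis by simp
qed

lemma upperB:
  fixes k :: "'a::real_inner \<Rightarrow> real"
  assumes cv: "convex_on UNIV k" and c: "c \<ge> 0"
    and h: "\<And>z. k z \<le> k y + inner a (z - y) + c/2 * (norm (z - y))^2"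
  shows "k z \<ge> k y + inner a (z - y)"
proof -
  have "k (y + (z - y)) - k y \<ge> inner a (z - y)"
  proof (rule core_lim[OF cv, where C = "c/2 * (norm (z-y))^2"])
    show "0 \<le> c/2 * (norm (z-y))^2" using c by simp
    fix t :: real assume t: "0 < t" "t \<le> 1"
    let ?w = "t *\<^sub>R (z-y)"
    have mid: "k y \<le> (1 - 1/2) * k (y - ?w) + (1/2) * k (y + ?w)"
    proof -
      have "(1 - 1/2) *\<^sub>R (y - ?w) + (1/2::real) *\<^sub>R (y + ?w) = y"
      proof -
        have "(1 - 1/2) *\<^sub>R (y - ?w) + (1/2::real) *\<^sub>R (y + ?w) = (1/2::real) *\<^sub>R y + (1/2::real) *\<^sub>R y"
          by (simp add: algebra_simps)
        also have "\<dots> = y" by (simp flip: scaleR_add_left)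
        finally show ?thesis .
      qed
      with convex_onD[OF cv, of "1/2" "y - ?w" "y + ?w"] show ?thesis by simp
    qed
    have hh: "k (y - ?w) \<le> k y + inner a (- ?w) + c/2 * (norm (-?w))^2"
      using h[of "y - ?w"] by simp
    have e1: "inner a (- ?w) = - (t * inner a (z-y))" by simp
    have e2: "c/2 * (norm (- ?w))^2 = c/2 * (norm (z-y))^2 * t^2" using t by (simp add: power_mult_distrib)
    have "k (y - ?w) \<le> k y - t * inner a (z-y) + c/2 * (norm (z-y))^2 * t^2"
      using hh e1 e2 by linarith
    with mid show "k (y + ?w) - k y \<ge> t * inner a (z-y) - c/2 * (norm (z-y))^2 * t^2"
      by simp
  qed
  thus ?thesis by simp
qed

definition hf :: "real \<Rightarrow> ('a::real_inner \<Rightarrow> real) \<Rightarrow> 'a \<Rightarrow> real" where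
  "hf \<mu> f z = f z - \<mu>/2 * (norm z)^2"

definition kap :: "real \<Rightarrow> ereal \<Rightarrow> real" where
  "kap \<mu> L = (if L = \<infinity> then 0 else 1 / (real_of_ereal L - \<mu>))"

lemma nsq: "(norm (z - y))^2 = (norm z)^2 - 2 * inner y z + (norm y)^2"
  for z y :: "'a::real_inner"
  by (simp add: power2_norm_eq_inner inner_diff_left inner_diff_right inner_commute)

lemma Fclass_h_convex: "Fclass \<mu> L f \<Longrightarrow> convex_on UNIV (hf \<mu> f)"
  unfolding Fclass_def hf_def by simp

lemma subg_h_global:
  fixes f :: "'a::euclidean_space \<Rightarrow> real"
  assumes F: "Fclass \<mu> L f" and g: "\<forall>w. f w \<ge> f y + inner g (w - y)"
  shows "hf \<mu> f w \<ge> hf \<mu> f y + inner (g - \<mu> *\<^sub>R y) (w - y)"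
proof -
  have key: "hf \<mu> f w \<ge> hf \<mu> f y + inner (g - \<mu> *\<^sub>R y) (w - y) - \<mu>/2 * (norm (w - y))^2" for w
  proof -
    have "f w \<ge> f y + inner g (w - y)" using g by blast
    moreover have "hf \<mu> f w - hf \<mu> f y - inner (g - \<mu> *\<^sub>R y) (w - y)
        = f w - f y - inner g (w - y) - \<mu>/2 * (norm (w - y))^2"
      unfolding hf_def nsq by (simp add: inner_diff_left inner_diff_right inner_commute algebra_simps power2_norm_eq_inner)
    ultimately show ?thesis by linarith
  qed
  show ?thesis
  proof (cases "\<mu> \<ge> 0")
    case True
    show ?thesis by (rule lowerA[OF Fclass_h_convex[OF F] True key])
  next
    case False
    have "0 \<le> - \<mu>/2 * (norm (w - y))^2" using False by (simp add: mult_nonpos_nonneg)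
    thus ?thesis using key[of w] by linarith
  qed
qed

lemma subg_h:
  fixes f :: "'a::euclidean_space \<Rightarrow> real"
  assumes F: "Fclass \<mu> L f" and g: "g \<in> subdiff \<mu> f y"
  shows "hf \<mu> f w \<ge> hf \<mu> f y + inner (g - \<mu> *\<^sub>R y) (w - y)"
proof (cases "\<mu> < 0")
  case True
  then obtain g' where g': "g = g' + \<mu> *\<^sub>R y" "g' \<in> cvx_subdiff (\<lambda>y. f y - \<mu> / 2 * (norm y)^2) y"
    using g unfolding subdiff_def by auto
  thus ?thesis unfolding cvx_subdiff_def hf_def by auto
next
  case False
  hence "\<forall>w. f w \<ge> f y + inner g (w - y)" using g unfolding subdiff_def cvx_subdiff_def by auto
  thus ?thesis by (rule subg_h_global[OF F])
qed

lemma descent: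
  fixes f :: "'a::euclidean_space \<Rightarrow> real"
  assumes F: "Fclass \<mu> L f" and Lf: "L \<noteq> \<infinity>"
    and v: "\<And>w. hf \<mu> f w \<ge> hf \<mu> f y + inner v (w - y)"
  defines "l \<equiv> real_of_ereal L - \<mu>"
  assumes lpos: "l > 0"
  shows "hf \<mu> f z \<le> hf \<mu> f y + inner v (z - y) + l/2 * (norm (z - y))^2"
proof -
  define k where "k = (\<lambda>z. real_of_ereal L / 2 * (norm z)^2 - f z)"
  have cvk: "convex_on UNIV k" using F Lf unfolding Fclass_def k_def by simp
  have kh: "k z = l/2 * (norm z)^2 - hf \<mu> f z" for z
    unfolding k_def hf_def l_def by (simp add: field_simps)
  have qid: "l/2 * (norm z)^2 = l/2 * (norm y)^2 + inner (l *\<^sub>R y) (z - y) + l/2 * (norm (z - y))^2" for z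
    unfolding nsq by (simp add: inner_diff_right algebra_simps power2_norm_eq_inner)
  have "k z \<le> k y + inner (l *\<^sub>R y - v) (z - y) + l/2 * (norm (z - y))^2" for z
    using v[of z] qid[of z] unfolding kh inner_diff_left by linarith
  hence "k z \<ge> k y + inner (l *\<^sub>R y - v) (z - y)"
    using upperB[OF cvk, of l y "l *\<^sub>R y - v" z] lpos by simp
  thus ?thesis using qid[of z] unfolding kh inner_diff_left by linarith
qed

lemma cocoercive:
  fixes f :: "'a::euclidean_space \<Rightarrow> real"
  assumes F: "Fclass \<mu> L f" and Lf: "L \<noteq> \<infinity>"
    and u: "\<And>w. hf \<mu> f w \<ge> hf \<mu> f x + inner u (w - x)"
    and v: "\<And>w. hf \<mu> f w \<ge> hf \<mu> f y + inner v (w - y)"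
  defines "l \<equiv> real_of_ereal L - \<mu>"
  assumes lpos: "l > 0"
  shows "hf \<mu> f y \<ge> hf \<mu> f x + inner u (y - x) + 1/(2*l) * (norm (v - u))^2"
proof -
  define z where "z = y - (1/l) *\<^sub>R (v - u)"
  have d: "hf \<mu> f z \<le> hf \<mu> f y + inner v (z - y) + l/2 * (norm (z - y))^2"
    using descent[OF F Lf v] lpos unfolding l_def by simp
  have m: "hf \<mu> f z \<ge> hf \<mu> f x + inner u (z - x)" by (rule u)
  have zy: "z - y = - (1/l) *\<^sub>R (v - u)" unfolding z_def by simp
  have e1: "inner v (z - y) - inner u (z - x) = - inner u (y - x) - (1/l) * (norm (v-u))^2"
  proof -
    have "inner v (z - y) - inner u (z - x) = inner (v - u) (z - y) - inner u (y - x)"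
      by (simp add: inner_diff_left inner_diff_right algebra_simps)
    also have "\<dots> = - (1/l) * inner (v-u) (v-u) - inner u (y - x)" unfolding zy by simp
    finally show ?thesis by (simp add: power2_norm_eq_inner)
  qed
  have nz: "norm (z - y) = (1/l) * norm (v-u)" unfolding zy using lpos by simp
  have e2: "l/2 * (norm (z - y))^2 = 1/(2*l) * (norm (v-u))^2"
    unfolding nz using lpos by (simp add: power2_eq_square field_simps)
  show ?thesis using d m e1 e2 by (simp add: field_simps) 
qed

lemma interp:
  fixes f :: "'a::euclidean_space \<Rightarrow> real"
  assumes F: "Fclass \<mu> L f" and mL: "ereal \<mu> < L"
    and w1: "\<And>w. hf \<mu> f w \<ge> hf \<mu> f y1 + inner u1 (w - y1)"
    and w2: "\<And>w. hf \<mu> f w \<ge> hf \<mu> f y2 + inner u2 (w - y2)"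
  shows "hf \<mu> f y1 \<ge> hf \<mu> f y2 + inner u2 (y1 - y2) + kap \<mu> L / 2 * (norm (u1 - u2))^2"
proof (cases "L = \<infinity>")
  case True
  thus ?thesis using w2[of y1] unfolding kap_def by simp
next
  case False
  then obtain r where r: "L = ereal r" using mL by (cases L) auto
  have lpos: "real_of_ereal L - \<mu> > 0" using mL r by simp
  have "hf \<mu> f y1 \<ge> hf \<mu> f y2 + inner u2 (y1 - y2) + 1/(2*(real_of_ereal L - \<mu>)) * (norm (u1 - u2))^2"
    by (rule cocoercive[OF F False w2 w1 lpos])
  moreover have "kap \<mu> L / 2 * (norm (u1-u2))^2 = 1/(2*(real_of_ereal L - \<mu>)) * (norm (u1-u2))^2"
    unfolding kap_def using False by simp
  ultimately show ?thesis by linarith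
qed

lemma kap_nonneg: "ereal \<mu> < L \<Longrightarrow> kap \<mu> L \<ge> 0"
  unfolding kap_def by (cases L) auto

lemma block:
  fixes a d :: "'a::real_inner"
  assumes c: "c \<ge> 0" and p: "p \<ge> 0" and cp: "c * p \<ge> r^2"
  shows "c * (norm d)^2 + 2 * r * inner a d + p * (norm a)^2 \<ge> 0"
proof -
  have cs: "\<bar>inner a d\<bar> \<le> norm a * norm d" by (rule Cauchy_Schwarz_ineq2)
  have "2 * r * inner a d \<ge> - (2 * \<bar>r\<bar> * (norm a * norm d))"
  proof -
    have "\<bar>2 * r * inner a d\<bar> \<le> 2 * \<bar>r\<bar> * (norm a * norm d)"
      using cs by (simp add: abs_mult mult_left_mono)
    thus ?thesis by linarith
  qed
  moreover have "c * (norm d)^2 - 2 * \<bar>r\<bar> * (norm a * norm d) + p * (norm a)^2 \<ge> 0"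
  proof (cases "p = 0")
    case True
    hence "r = 0" using cp c by simp
    thus ?thesis using True c by simp
  next
    case False
    hence pp: "p > 0" using p by simp
    have "p * (c * (norm d)^2 - 2 * \<bar>r\<bar> * (norm a * norm d) + p * (norm a)^2)
        = (p * norm a - \<bar>r\<bar> * norm d)^2 + (c * p - r^2) * (norm d)^2"
      by (simp add: power2_eq_square algebra_simps)
    also have "\<dots> \<ge> 0" using cp by simp
    finally show ?thesis using pp by (simp add: zero_le_mult_iff)
  qed
  ultimately show ?thesis by linarith
qed

lemma combine:
  fixes x xp g1 g2 g2p :: "'a::real_inner" and f1 f2 :: "'a \<Rightarrow> real"
  assumes IA: "hf \<mu>1 f1 x \<ge> hf \<mu>1 f1 xp + inner (g2 - \<mu>1 *\<^sub>R xp) (x - xp)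
                + ka/2 * (norm ((g1 - \<mu>1 *\<^sub>R x) - (g2 - \<mu>1 *\<^sub>R xp)))^2"
    and IC: "hf \<mu>2 f2 xp \<ge> hf \<mu>2 f2 x + inner (g2 - \<mu>2 *\<^sub>R x) (xp - x)
                + kb/2 * (norm ((g2p - \<mu>2 *\<^sub>R xp) - (g2 - \<mu>2 *\<^sub>R x)))^2"
    and ID: "hf \<mu>2 f2 x \<ge> hf \<mu>2 f2 xp + inner (g2p - \<mu>2 *\<^sub>R xp) (x - xp)
                + kb/2 * (norm ((g2 - \<mu>2 *\<^sub>R x) - (g2p - \<mu>2 *\<^sub>R xp)))^2"
    and beta: "\<beta> \<ge> 0"
    and B1: "ca \<ge> 0" "ka - \<sigma> \<ge> 0" "ca * (ka - \<sigma>) \<ge> (ka * \<mu>1)^2"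
    and B2: "cb \<ge> 0" "(1+2*\<beta>)*kb - \<sigma>p \<ge> 0" "cb * ((1+2*\<beta>)*kb - \<sigma>p) \<ge> (\<beta> + kb*\<mu>2 + 2*\<beta>*kb*\<mu>2)^2"
    and csum: "ca + cb = \<mu>1 * (1 + ka*\<mu>1) + (1+2*\<beta>) * \<mu>2 * (1 + kb*\<mu>2)"
  shows "f1 x - f2 x - (f1 xp - f2 xp) \<ge> \<sigma>/2 * (norm (g1 - g2))^2 + \<sigma>p/2 * (norm (g2 - g2p))^2"
proof -
  define d where "d = x - xp"
  define a where "a = g1 - g2"
  define b where "b = g2 - g2p"
  have bl1: "ca * (norm d)^2 + 2 * (- (ka*\<mu>1)) * inner a d + (ka - \<sigma>) * (norm a)^2 \<ge> 0"
    by (rule block) (use B1 in auto)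
  have bl2: "cb * (norm d)^2 + 2 * (- (\<beta> + kb*\<mu>2 + 2*\<beta>*kb*\<mu>2)) * inner b d
       + ((1+2*\<beta>)*kb - \<sigma>p) * (norm b)^2 \<ge> 0"
    by (rule block) (use B2 in \<open>simp_all only: power2_minus\<close>)
  have x: "x = xp + d" and g1: "g1 = g2 + a" and g2p: "g2p = g2 - b"
    unfolding d_def a_def b_def by auto
  define sA where "sA = hf \<mu>1 f1 x - (hf \<mu>1 f1 xp + inner (g2 - \<mu>1 *\<^sub>R xp) (x - xp)
                + ka/2 * (norm ((g1 - \<mu>1 *\<^sub>R x) - (g2 - \<mu>1 *\<^sub>R xp)))^2)"
  define sC where "sC = hf \<mu>2 f2 xp - (hf \<mu>2 f2 x + inner (g2 - \<mu>2 *\<^sub>R x) (xp - x)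
                + kb/2 * (norm ((g2p - \<mu>2 *\<^sub>R xp) - (g2 - \<mu>2 *\<^sub>R x)))^2)"
  define sD where "sD = hf \<mu>2 f2 x - (hf \<mu>2 f2 xp + inner (g2p - \<mu>2 *\<^sub>R xp) (x - xp)
                + kb/2 * (norm ((g2 - \<mu>2 *\<^sub>R x) - (g2p - \<mu>2 *\<^sub>R xp)))^2)"
  have s: "sA \<ge> 0" "sC \<ge> 0" "sD \<ge> 0" using IA IC ID unfolding sA_def sC_def sD_def by auto
  have cbe: "cb = \<mu>1 * (1 + ka*\<mu>1) + (1+2*\<beta>) * \<mu>2 * (1 + kb*\<mu>2) - ca" using csum by simp
  have key: "2 * (f1 x - f2 x - (f1 xp - f2 xp) - (\<sigma>/2 * (norm (g1 - g2))^2 + \<sigma>p/2 * (norm (g2 - g2p))^2))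
     = 2 * (sA + (1+\<beta>) * sC + \<beta> * sD)
       + (ca * (norm d)^2 + 2 * (- (ka*\<mu>1)) * inner a d + (ka - \<sigma>) * (norm a)^2)
       + (cb * (norm d)^2 + 2 * (- (\<beta> + kb*\<mu>2 + 2*\<beta>*kb*\<mu>2)) * inner b d
          + ((1+2*\<beta>)*kb - \<sigma>p) * (norm b)^2)"
    unfolding cbe sA_def sC_def sD_def hf_def x g1 g2p
    by (simp add: power2_norm_eq_inner inner_diff_left inner_diff_right inner_add_left inner_add_right
        inner_commute algebra_simps; simp add: field_simps)
  have "0 \<le> 2 * (sA + (1+\<beta>) * sC + \<beta> * sD)" using s beta by simp
  hence "0 \<le> 2 * (f1 x - f2 x - (f1 xp - f2 xp) - (\<sigma>/2 * (norm (g1 - g2))^2 + \<sigma>p/2 * (norm (g2 - g2p))^2))"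
    using key bl1 bl2 by linarith
  thus ?thesis by simp
qed

lemma G:
  fixes f1 f2 :: "'a::euclidean_space \<Rightarrow> real" and x xp g1 g2 g2p :: 'a
  assumes F1: "Fclass \<mu>1 L1 f1" and F2: "Fclass \<mu>2 L2 f2"
    and m1: "ereal \<mu>1 < L1" and m2: "ereal \<mu>2 < L2"
    and h1x: "\<And>w. hf \<mu>1 f1 w \<ge> hf \<mu>1 f1 x + inner (g1 - \<mu>1 *\<^sub>R x) (w - x)"
    and h1p: "\<And>w. hf \<mu>1 f1 w \<ge> hf \<mu>1 f1 xp + inner (g2 - \<mu>1 *\<^sub>R xp) (w - xp)"
    and h2x: "\<And>w. hf \<mu>2 f2 w \<ge> hf \<mu>2 f2 x + inner (g2 - \<mu>2 *\<^sub>R x) (w - x)"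
    and h2p: "\<And>w. hf \<mu>2 f2 w \<ge> hf \<mu>2 f2 xp + inner (g2p - \<mu>2 *\<^sub>R xp) (w - xp)"
    and beta: "\<beta> \<ge> 0"
    and B1: "\<mu>1 * (1 + kap \<mu>1 L1 * \<mu>1) - e \<ge> 0" "kap \<mu>1 L1 - \<sigma> \<ge> 0"
       "(\<mu>1 * (1 + kap \<mu>1 L1 * \<mu>1) - e) * (kap \<mu>1 L1 - \<sigma>) \<ge> (kap \<mu>1 L1 * \<mu>1)^2"
    and B2: "e + (1+2*\<beta>) * \<mu>2 * (1 + kap \<mu>2 L2 * \<mu>2) \<ge> 0" "(1+2*\<beta>)*kap \<mu>2 L2 - \<sigma>p \<ge> 0"
       "(e + (1+2*\<beta>) * \<mu>2 * (1 + kap \<mu>2 L2 * \<mu>2)) * ((1+2*\<beta>)*kap \<mu>2 L2 - \<sigma>p)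
          \<ge> (\<beta> + kap \<mu>2 L2*\<mu>2 + 2*\<beta>*kap \<mu>2 L2*\<mu>2)^2"
  shows "f1 x - f2 x - (f1 xp - f2 xp) \<ge> \<sigma>/2 * (norm (g1 - g2))^2 + \<sigma>p/2 * (norm (g2 - g2p))^2"
proof (rule combine[where ka = "kap \<mu>1 L1" and kb = "kap \<mu>2 L2" and \<beta> = \<beta>
     and ca = "\<mu>1 * (1 + kap \<mu>1 L1 * \<mu>1) - e" and cb = "e + (1+2*\<beta>) * \<mu>2 * (1 + kap \<mu>2 L2 * \<mu>2)"])
  show "hf \<mu>1 f1 x \<ge> hf \<mu>1 f1 xp + inner (g2 - \<mu>1 *\<^sub>R xp) (x - xp)
                + kap \<mu>1 L1/2 * (norm ((g1 - \<mu>1 *\<^sub>R x) - (g2 - \<mu>1 *\<^sub>R xp)))^2"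
    by (rule interp[OF F1 m1 h1x h1p])
  show "hf \<mu>2 f2 xp \<ge> hf \<mu>2 f2 x + inner (g2 - \<mu>2 *\<^sub>R x) (xp - x)
                + kap \<mu>2 L2/2 * (norm ((g2p - \<mu>2 *\<^sub>R xp) - (g2 - \<mu>2 *\<^sub>R x)))^2"
    by (rule interp[OF F2 m2 h2p h2x])
  show "hf \<mu>2 f2 x \<ge> hf \<mu>2 f2 xp + inner (g2p - \<mu>2 *\<^sub>R xp) (x - xp)
                + kap \<mu>2 L2/2 * (norm ((g2 - \<mu>2 *\<^sub>R x) - (g2p - \<mu>2 *\<^sub>R xp)))^2"
    by (rule interp[OF F2 m2 h2x h2p])
qed (use beta B1 B2 in auto)

lemma kap_fin: "kap \<mu> (ereal l) = 1 / (l - \<mu>)" unfolding kap_def by simp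
lemma kap_inf: "kap \<mu> \<infinity> = 0" unfolding kap_def by simp

lemma Lim_const_top: "Lim at_top (\<lambda>t::real. c) = c"
  by (rule tendsto_Lim) auto

lemma lim_ext_fin: "lim_ext \<phi> (ereal a) (ereal b) = \<phi> a b"
  unfolding lim_ext_def by simp

lemma famB2:
  fixes l2 \<mu>2 \<beta> :: real
  assumes l2: "l2 > 0" "l2 > \<mu>2" and b: "\<beta> \<ge> 0" and c: "\<beta>*l2 + \<mu>2*(1+\<beta>) \<ge> 0"
    and k: "k2 = 1/(l2-\<mu>2)"
  shows "\<beta>*l2 + (1+2*\<beta>) * \<mu>2 * (1 + k2 * \<mu>2) \<ge> 0"
    "(1+2*\<beta>)*k2 - (1+\<beta>)/l2 \<ge> 0"
    "(\<beta>*l2 + (1+2*\<beta>) * \<mu>2 * (1 + k2 * \<mu>2)) * ((1+2*\<beta>)*k2 - (1+\<beta>)/l2)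
       \<ge> (\<beta> + k2*\<mu>2 + 2*\<beta>*k2*\<mu>2)^2"
proof -
  obtain d2 where d2: "l2 = \<mu>2 + d2" "d2 > 0" using l2 by (metis add.commute diff_add_cancel diff_gt_0_iff_gt)
  define t where "t = \<beta> + k2*\<mu>2 + 2*\<beta>*k2*\<mu>2"
  have te: "t = (\<beta>*l2 + \<mu>2*(1+\<beta>)) / d2"
    unfolding t_def k d2(1) using d2(2) by (simp add: field_simps)
  have t0: "t \<ge> 0" unfolding te using c d2 by simp
  have ce: "\<beta>*l2 + (1+2*\<beta>) * \<mu>2 * (1 + k2 * \<mu>2) = l2 * t"
    unfolding t_def k d2(1) using d2(2) by (simp add: field_simps)
  have qe: "(1+2*\<beta>)*k2 - (1+\<beta>)/l2 = t / l2"
    unfolding te k d2(1) using d2 l2 by (simp add: field_simps)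
  show "\<beta>*l2 + (1+2*\<beta>) * \<mu>2 * (1 + k2 * \<mu>2) \<ge> 0" unfolding ce using t0 l2 by simp
  show "(1+2*\<beta>)*k2 - (1+\<beta>)/l2 \<ge> 0" unfolding qe using t0 l2 by simp
  show "(\<beta>*l2 + (1+2*\<beta>) * \<mu>2 * (1 + k2 * \<mu>2)) * ((1+2*\<beta>)*k2 - (1+\<beta>)/l2)
       \<ge> (\<beta> + k2*\<mu>2 + 2*\<beta>*k2*\<mu>2)^2"
    unfolding ce qe t_def[symmetric] using l2 by (simp add: power2_eq_square)
qed

lemma zeroB1:
  fixes k \<mu>1 :: real assumes "k \<ge> 0"
  shows "\<mu>1 * (1 + k * \<mu>1) - \<mu>1 \<ge> 0" "k - 0 \<ge> 0"
    "(\<mu>1 * (1 + k * \<mu>1) - \<mu>1) * (k - 0) \<ge> (k * \<mu>1)^2"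
proof -
  have e: "\<mu>1 * (1 + k * \<mu>1) - \<mu>1 = k * \<mu>1^2" by (simp add: algebra_simps power2_eq_square)
  show "\<mu>1 * (1 + k * \<mu>1) - \<mu>1 \<ge> 0" unfolding e using assms by simp
  show "k - 0 \<ge> 0" using assms by simp
  show "(\<mu>1 * (1 + k * \<mu>1) - \<mu>1) * (k - 0) \<ge> (k * \<mu>1)^2" unfolding e
    by (simp add: power2_eq_square algebra_simps)
qed

lemma inv_ereal_nz: "r \<noteq> 0 \<Longrightarrow> inverse (ereal r) = ereal (1/r)"
  by (simp add: inverse_eq_divide)

lemma famG:
  fixes f1 f2 :: "'a::euclidean_space \<Rightarrow> real" and x xp g1 g2 g2p :: 'a
  assumes F1: "Fclass \<mu>1 L1 f1" and F2: "Fclass \<mu>2 L2 f2"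
    and m1: "ereal \<mu>1 < L1" and m2: "ereal \<mu>2 < L2"
    and h1x: "\<And>w. hf \<mu>1 f1 w \<ge> hf \<mu>1 f1 x + inner (g1 - \<mu>1 *\<^sub>R x) (w - x)"
    and h1p: "\<And>w. hf \<mu>1 f1 w \<ge> hf \<mu>1 f1 xp + inner (g2 - \<mu>1 *\<^sub>R xp) (w - xp)"
    and h2x: "\<And>w. hf \<mu>2 f2 w \<ge> hf \<mu>2 f2 x + inner (g2 - \<mu>2 *\<^sub>R x) (w - x)"
    and h2p: "\<And>w. hf \<mu>2 f2 w \<ge> hf \<mu>2 f2 xp + inner (g2p - \<mu>2 *\<^sub>R xp) (w - xp)"
    and l2: "L2 = ereal l2" "l2 > 0" and b0: "\<beta> \<ge> 0" and cond: "\<beta>*l2 + \<mu>2*(1+\<beta>) \<ge> 0"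
    and B1: "\<mu>1 * (1 + kap \<mu>1 L1 * \<mu>1) - \<beta>*l2 \<ge> 0" "kap \<mu>1 L1 - \<sigma> \<ge> 0"
       "(\<mu>1 * (1 + kap \<mu>1 L1 * \<mu>1) - \<beta>*l2) * (kap \<mu>1 L1 - \<sigma>) \<ge> (kap \<mu>1 L1 * \<mu>1)^2"
  shows "f1 x - f2 x - (f1 xp - f2 xp) \<ge> \<sigma>/2 * (norm (g1 - g2))^2
          + (1+\<beta>)/l2 / 2 * (norm (g2 - g2p))^2"
proof -
  have l2p: "\<mu>2 < l2" using m2 unfolding l2 by auto
  have k2: "kap \<mu>2 L2 = 1/(l2 - \<mu>2)" unfolding l2 kap_fin ..
  note fb = famB2[OF l2(2) l2p b0 cond k2]
  show ?thesis by (rule G[OF F1 F2 m1 m2 h1x h1p h2x h2p b0 B1 fb])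
qed

lemma case7:
  fixes f1 f2 :: "'a::euclidean_space \<Rightarrow> real" and x xp g1 g2 g2p :: 'a
  assumes F1: "Fclass \<mu>1 L1 f1" and F2: "Fclass \<mu>2 L2 f2"
    and m1: "ereal \<mu>1 < L1" and m2: "ereal \<mu>2 < L2"
    and h1x: "\<And>w. hf \<mu>1 f1 w \<ge> hf \<mu>1 f1 x + inner (g1 - \<mu>1 *\<^sub>R x) (w - x)"
    and h1p: "\<And>w. hf \<mu>1 f1 w \<ge> hf \<mu>1 f1 xp + inner (g2 - \<mu>1 *\<^sub>R xp) (w - xp)"
    and h2x: "\<And>w. hf \<mu>2 f2 w \<ge> hf \<mu>2 f2 x + inner (g2 - \<mu>2 *\<^sub>R x) (w - x)"
    and h2p: "\<And>w. hf \<mu>2 f2 w \<ge> hf \<mu>2 f2 xp + inner (g2p - \<mu>2 *\<^sub>R xp) (w - xp)"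
    and l2: "L2 = ereal l2" "l2 > 0" and mu1: "\<mu>1 \<ge> 0"
    and mu: "0 \<le> \<mu>2 \<or> (\<mu>2 < 0 \<and> 0 < \<mu>1 \<and> inverse (ereal \<mu>1) + inverse (ereal \<mu>2) + inverse L2 \<le> 0)"
  shows "f1 x - f2 x - (f1 xp - f2 xp) \<ge> 0/2 * (norm (g1 - g2))^2
          + (l2 + \<mu>1) / l2^2 / 2 * (norm (g2 - g2p))^2"
proof -
  have cond: "\<mu>1/l2 * l2 + \<mu>2 * (1 + \<mu>1/l2) \<ge> 0"
  proof (cases "0 \<le> \<mu>2")
    case True thus ?thesis using l2 mu1 by simp
  next
    case False
    hence m2n: "\<mu>2 < 0" and S: "inverse (ereal \<mu>1) + inverse (ereal \<mu>2) + inverse L2 \<le> 0"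
      and m1p: "\<mu>1 > 0" using mu by auto
    have "ereal (1/\<mu>1 + 1/\<mu>2 + 1/l2) \<le> 0"
      using S l2 m2n m1p unfolding l2 by (simp add: inv_ereal_nz inverse_eq_divide)
    hence S': "1/\<mu>1 + 1/\<mu>2 + 1/l2 \<le> 0" by simp
    have e: "\<mu>1/l2 * l2 + \<mu>2 * (1 + \<mu>1/l2) = (\<mu>1 * \<mu>2) * (1/\<mu>1 + 1/\<mu>2 + 1/l2)"
      using l2 m2n m1p by (simp add: field_simps)
    have "\<mu>1 * \<mu>2 \<le> 0" using m1p m2n mult_pos_neg[of \<mu>1 \<mu>2] by simp
    thus ?thesis unfolding e using S' by (simp add: mult_nonpos_nonpos)
  qed
  have eq1: "\<mu>1/l2 * l2 = \<mu>1" using l2 by simp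
  have eq2: "(1 + \<mu>1/l2)/l2 = (l2 + \<mu>1) / l2^2" using l2 by (simp add: field_simps power2_eq_square)
  have b0: "\<mu>1/l2 \<ge> 0" using l2 mu1 by simp
  have zb: "\<mu>1 * (1 + kap \<mu>1 L1 * \<mu>1) - \<mu>1/l2*l2 \<ge> 0" "kap \<mu>1 L1 - 0 \<ge> 0"
    "(\<mu>1 * (1 + kap \<mu>1 L1 * \<mu>1) - \<mu>1/l2*l2) * (kap \<mu>1 L1 - 0) \<ge> (kap \<mu>1 L1 * \<mu>1)^2"
    unfolding eq1 by (rule zeroB1[OF kap_nonneg[OF m1]])+
  show ?thesis using famG[OF F1 F2 m1 m2 h1x h1p h2x h2p l2 b0 cond zb] unfolding eq2 .
qed

lemma inv_top: "((\<lambda>t::real. inverse t) \<longlongrightarrow> 0) at_top"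
  by (rule tendsto_inverse_0_at_top[OF filterlim_ident])

lemma lim1a:
  assumes "l2 \<noteq> 0"
  shows "Lim at_top (\<lambda>t::real. (l2 - \<mu>1) / (l2 * (t - \<mu>1))) = 0"
proof (rule tendsto_Lim)
  have "((\<lambda>t. (l2-\<mu>1) * inverse t / (l2 * (1 - \<mu>1 * inverse t))) \<longlongrightarrow> (l2-\<mu>1)*0/(l2*(1-\<mu>1*0))) at_top"
    by (intro tendsto_intros inv_top) (simp add: assms)
  moreover have "eventually (\<lambda>t. (l2-\<mu>1) * inverse t / (l2 * (1 - \<mu>1 * inverse t)) = (l2 - \<mu>1) / (l2 * (t - \<mu>1))) at_top"
    using eventually_gt_at_top[of "max 0 \<mu>1"] proof eventually_elim
    case (elim t)
    hence "t \<noteq> 0" "t - \<mu>1 \<noteq> 0" by auto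
    thus ?case using assms by (simp add: divide_simps)
  qed
  ultimately show "((\<lambda>t::real. (l2 - \<mu>1) / (l2 * (t - \<mu>1))) \<longlongrightarrow> 0) at_top"
    by (simp add: tendsto_cong)
qed simp

lemma lim1b:
  assumes "l2 \<noteq> 0"
  shows "Lim at_top (\<lambda>t::real. (1 / l2) * (1 + \<mu>1 * (t - l2) / (l2 * (t - \<mu>1)))) = (1 + \<mu>1/l2)/l2"
proof (rule tendsto_Lim)
  have "((\<lambda>t. (1 / l2) * (1 + \<mu>1 * (1 - l2 * inverse t) / (l2 * (1 - \<mu>1 * inverse t)))) \<longlongrightarrow>
      (1 / l2) * (1 + \<mu>1 * (1 - l2 * 0) / (l2 * (1 - \<mu>1 * 0)))) at_top"
    by (intro tendsto_intros inv_top) (simp add: assms)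
  moreover have "eventually (\<lambda>t. (1 / l2) * (1 + \<mu>1 * (1 - l2 * inverse t) / (l2 * (1 - \<mu>1 * inverse t)))
     = (1 / l2) * (1 + \<mu>1 * (t - l2) / (l2 * (t - \<mu>1)))) at_top"
    using eventually_gt_at_top[of "max 0 \<mu>1"] proof eventually_elim
    case (elim t)
    hence "t \<noteq> 0" "t - \<mu>1 \<noteq> 0" by auto
    thus ?case using assms by (simp add: divide_simps)
  qed
  ultimately have "((\<lambda>t::real. (1 / l2) * (1 + \<mu>1 * (t - l2) / (l2 * (t - \<mu>1)))) \<longlongrightarrow>
      (1 / l2) * (1 + \<mu>1 * (1 - l2 * 0) / (l2 * (1 - \<mu>1 * 0)))) at_top"
    by (rule Lim_transform_eventually)
  thus "((\<lambda>t::real. (1 / l2) * (1 + \<mu>1 * (t - l2) / (l2 * (t - \<mu>1)))) \<longlongrightarrow> (1 + \<mu>1/l2)/l2) at_top"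
    by simp
qed simp

lemma case1:
  fixes f1 f2 :: "'a::euclidean_space \<Rightarrow> real" and x xp g1 g2 g2p :: 'a
  assumes F1: "Fclass \<mu>1 L1 f1" and F2: "Fclass \<mu>2 L2 f2"
    and m1: "ereal \<mu>1 < L1" and m2: "ereal \<mu>2 < L2"
    and h1x: "\<And>w. hf \<mu>1 f1 w \<ge> hf \<mu>1 f1 x + inner (g1 - \<mu>1 *\<^sub>R x) (w - x)"
    and h1p: "\<And>w. hf \<mu>1 f1 w \<ge> hf \<mu>1 f1 xp + inner (g2 - \<mu>1 *\<^sub>R xp) (w - xp)"
    and h2x: "\<And>w. hf \<mu>2 f2 w \<ge> hf \<mu>2 f2 x + inner (g2 - \<mu>2 *\<^sub>R x) (w - x)"
    and h2p: "\<And>w. hf \<mu>2 f2 w \<ge> hf \<mu>2 f2 xp + inner (g2p - \<mu>2 *\<^sub>R xp) (w - xp)"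
    and notboth: "\<not> (L1 = \<infinity> \<and> L2 = \<infinity>)"
    and c: "L2 \<le> L1" "ereal \<mu>1 < L2" "0 \<le> \<mu>1"
    and mu: "0 \<le> \<mu>2 \<or> (\<mu>1 > - \<mu>2 \<and> - \<mu>2 > 0 \<and>
        inverse (ereal \<mu>1) + inverse (ereal \<mu>2) + inverse L2 \<le> inverse L1 * (2 + L2 / ereal \<mu>2))"
  shows "f1 x - f2 x - (f1 xp - f2 xp) \<ge>
      lim_ext (\<lambda>l1 l2. (l2 - \<mu>1) / (l2 * (l1 - \<mu>1))) L1 L2 / 2 * (norm (g1 - g2))^2
    + lim_ext (\<lambda>l1 l2. (1 / l2) * (1 + \<mu>1 * (l1 - l2) / (l2 * (l1 - \<mu>1)))) L1 L2 / 2 * (norm (g2 - g2p))^2"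
proof -
  have L2fin: "L2 \<noteq> \<infinity>" using notboth c(1) by auto
  obtain l2 where l2: "L2 = ereal l2" using L2fin c(2) by (cases L2) auto
  have l2p: "l2 > 0" "\<mu>1 < l2" using c(2,3) unfolding l2 by auto
  show ?thesis
  proof (cases "L1 = \<infinity>")
    case True
    have lima: "lim_ext (\<lambda>l1 l2. (l2 - \<mu>1) / (l2 * (l1 - \<mu>1))) L1 L2 = 0"
      unfolding lim_ext_def True l2 using lim1a[of l2 \<mu>1] l2p by simp
    have limb: "lim_ext (\<lambda>l1 l2. (1 / l2) * (1 + \<mu>1 * (l1 - l2) / (l2 * (l1 - \<mu>1)))) L1 L2 = (l2 + \<mu>1) / l2^2"
    proof -
      have q: "(1 + \<mu>1/l2)/l2 = (l2+\<mu>1)/l2^2" using l2p by (simp add: field_simps power2_eq_square)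
      show ?thesis unfolding lim_ext_def True l2 using lim1b[of l2 \<mu>1] l2p q by simp
    qed
    have mu': "0 \<le> \<mu>2 \<or> (\<mu>2 < 0 \<and> 0 < \<mu>1 \<and> inverse (ereal \<mu>1) + inverse (ereal \<mu>2) + inverse L2 \<le> 0)"
    proof (cases "0 \<le> \<mu>2")
      case False
      hence h: "\<mu>1 > - \<mu>2" "- \<mu>2 > 0"
        "inverse (ereal \<mu>1) + inverse (ereal \<mu>2) + inverse L2 \<le> inverse L1 * (2 + L2 / ereal \<mu>2)"
        using mu by auto
      have T: "inverse L1 * (2 + L2 / ereal \<mu>2) = 0" unfolding True l2 using h(2)
        by (simp add: divide_ereal_def inv_ereal_nz)
      have "inverse (ereal \<mu>1) + inverse (ereal \<mu>2) + inverse L2 \<le> 0" using h(3) unfolding T .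
      moreover have "\<mu>2 < 0" "0 < \<mu>1" using h(1,2) by linarith+
      ultimately show ?thesis by blast
    qed simp
    show ?thesis unfolding lima limb
      by (rule case7[OF F1 F2 m1 m2 h1x h1p h2x h2p l2 l2p(1) c(3) mu'])
  next
    case False
    obtain l1 where l1: "L1 = ereal l1" using False m1 by (cases L1) auto
    have l1p: "l2 \<le> l1" "\<mu>1 < l1" using c(1) m1 unfolding l1 l2 by auto
    obtain d1 where d1: "l1 = \<mu>1 + d1" "d1 > 0" using l1p by (metis add.commute diff_add_cancel diff_gt_0_iff_gt)
    define \<beta> where "\<beta> = \<mu>1 * (l1 - l2) / (l2 * (l1 - \<mu>1))"
    define \<sigma> where "\<sigma> = (l2 - \<mu>1) / (l2 * (l1 - \<mu>1))"
    have lima: "lim_ext (\<lambda>l1 l2. (l2 - \<mu>1) / (l2 * (l1 - \<mu>1))) L1 L2 = \<sigma>"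
      unfolding l1 l2 lim_ext_fin \<sigma>_def ..
    have limb: "lim_ext (\<lambda>l1 l2. (1 / l2) * (1 + \<mu>1 * (l1 - l2) / (l2 * (l1 - \<mu>1)))) L1 L2 = (1 + \<beta>)/l2"
      unfolding l1 l2 lim_ext_fin \<beta>_def by simp
    have k1: "kap \<mu>1 L1 = 1/d1" unfolding l1 kap_fin d1 by simp
    have b0: "\<beta> \<ge> 0" unfolding \<beta>_def using l1p l2p c(3) by simp
    have c1e: "\<mu>1 * (1 + kap \<mu>1 L1 * \<mu>1) - \<beta>*l2 = \<mu>1 * l2 / d1"
      unfolding k1 \<beta>_def d1(1) using d1(2) l2p by (simp add: field_simps)
    have pe: "kap \<mu>1 L1 - \<sigma> = \<mu>1 / (l2 * d1)"
      unfolding k1 \<sigma>_def d1(1) using d1(2) l2p by (simp add: field_simps)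
    have B1: "\<mu>1 * (1 + kap \<mu>1 L1 * \<mu>1) - \<beta>*l2 \<ge> 0" "kap \<mu>1 L1 - \<sigma> \<ge> 0"
       "(\<mu>1 * (1 + kap \<mu>1 L1 * \<mu>1) - \<beta>*l2) * (kap \<mu>1 L1 - \<sigma>) \<ge> (kap \<mu>1 L1 * \<mu>1)^2"
    proof -
      have pr: "(\<mu>1*l2/d1)*(\<mu>1/(l2*d1)) = (1/d1*\<mu>1)^2" using l2p d1 by (simp add: field_simps power2_eq_square)
      show "\<mu>1 * (1 + kap \<mu>1 L1 * \<mu>1) - \<beta>*l2 \<ge> 0" unfolding c1e using c(3) l2p d1(2) by simp
      show "kap \<mu>1 L1 - \<sigma> \<ge> 0" unfolding pe using c(3) l2p d1(2) by simp
      show "(\<mu>1 * (1 + kap \<mu>1 L1 * \<mu>1) - \<beta>*l2) * (kap \<mu>1 L1 - \<sigma>) \<ge> (kap \<mu>1 L1 * \<mu>1)^2"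
      proof -
        have kk: "(kap \<mu>1 L1 * \<mu>1)^2 = (1/d1*\<mu>1)^2" by (simp add: k1)
        show ?thesis unfolding c1e pe kk pr by simp
      qed
    qed
    have cond: "\<beta>*l2 + \<mu>2*(1+\<beta>) \<ge> 0"
    proof (cases "0 \<le> \<mu>2")
      case True thus ?thesis using b0 l2p by simp
    next
      case False
      hence h: "\<mu>1 > - \<mu>2" "- \<mu>2 > 0"
        "inverse (ereal \<mu>1) + inverse (ereal \<mu>2) + inverse L2 \<le> inverse L1 * (2 + L2 / ereal \<mu>2)"
        using mu by auto
      have m1p: "\<mu>1 > 0" using h by simp
      have "ereal (1/\<mu>1 + 1/\<mu>2 + 1/l2) \<le> ereal (1/l1 * (2 + l2/\<mu>2))"
        using h(3) l2p m1p h(2) l1p unfolding l1 l2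
        by (simp add: divide_ereal_def inv_ereal_nz inverse_eq_divide)
      hence S: "1/\<mu>1 + 1/\<mu>2 + 1/l2 - 1/l1 * (2 + l2/\<mu>2) \<le> 0" by simp
      have e: "\<beta>*l2 + \<mu>2*(1+\<beta>) = (\<mu>1 * \<mu>2 * l1 / (l1 - \<mu>1)) * (1/\<mu>1 + 1/\<mu>2 + 1/l2 - 1/l1 * (2 + l2/\<mu>2))"
      proof -
        have nz: "l2 \<noteq> 0" "\<mu>1 \<noteq> 0" "\<mu>2 \<noteq> 0" "l1 \<noteq> 0" "l1 - \<mu>1 \<noteq> 0"
          using l2p m1p h(2) l1p by auto
        show ?thesis unfolding \<beta>_def using nz by (simp add: divide_simps) (simp add: algebra_simps)
      qed
      have "\<mu>1 * \<mu>2 * l1 / (l1 - \<mu>1) \<le> 0"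
      proof -
        have "\<mu>1 * \<mu>2 < 0" using m1p h(2) mult_pos_neg[of \<mu>1 \<mu>2] by simp
        moreover have "l1 / (l1 - \<mu>1) > 0" using l1p l2p by simp
        ultimately have "(\<mu>1 * \<mu>2) * (l1 / (l1 - \<mu>1)) < 0" using mult_neg_pos by blast
        thus ?thesis by simp
      qed
      from mult_nonpos_nonpos[OF this S] show ?thesis unfolding e .
    qed
    show ?thesis unfolding lima limb
      by (rule famG[OF F1 F2 m1 m2 h1x h1p h2x h2p l2 l2p(1) b0 cond B1])
  qed
qed

lemma c3f1:
  fixes l1 \<mu>1 S :: real
  assumes a: "l1 > \<mu>1" "\<mu>1 > 0" "S \<le> 0"
  shows "\<mu>1*(1 + 1/(l1-\<mu>1)*\<mu>1) - \<mu>1/(1-\<mu>1*S) \<ge> 0"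
    "1/(l1-\<mu>1) - ((1/l1)*S)/(S - 1/l1) \<ge> 0"
    "(\<mu>1*(1 + 1/(l1-\<mu>1)*\<mu>1) - \<mu>1/(1-\<mu>1*S)) * (1/(l1-\<mu>1) - ((1/l1)*S)/(S - 1/l1)) \<ge> (1/(l1-\<mu>1)*\<mu>1)^2"
proof -
  have nz: "l1 \<noteq> 0" "l1 - \<mu>1 \<noteq> 0" "1 - \<mu>1*S \<noteq> 0" "1 - l1*S \<noteq> 0" "S - 1/l1 \<noteq> 0" "S*l1 - 1 \<noteq> 0"
  proof -
    have "\<mu>1*S \<le> 0" "l1*S \<le> 0" using a by (auto simp: mult_nonneg_nonpos)
    moreover have "1/l1 > 0" using a by simp
    ultimately show "l1 \<noteq> 0" "l1 - \<mu>1 \<noteq> 0" "1 - \<mu>1*S \<noteq> 0" "1 - l1*S \<noteq> 0" "S - 1/l1 \<noteq> 0" "S*l1 - 1 \<noteq> 0"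
      using a by (auto simp: algebra_simps)
  qed
  have c1: "\<mu>1*(1 + 1/(l1-\<mu>1)*\<mu>1) - \<mu>1/(1-\<mu>1*S) = \<mu>1^2 * (1 - l1*S) / ((l1-\<mu>1)*(1-\<mu>1*S))"
    using nz by (simp add: divide_simps; simp add: algebra_simps power2_eq_square)
  have p: "1/(l1-\<mu>1) - ((1/l1)*S)/(S - 1/l1) = (1-\<mu>1*S) / ((l1-\<mu>1)*(1-l1*S))"
    using nz by (simp add: divide_simps; simp add: algebra_simps)
  have "l1*S \<le> 0" "\<mu>1*S \<le> 0" using a by (auto intro: mult_nonneg_nonpos)
  hence pos: "1 - l1*S > 0" "1 - \<mu>1*S > 0" "l1 - \<mu>1 > 0" using a by auto
  show "\<mu>1*(1 + 1/(l1-\<mu>1)*\<mu>1) - \<mu>1/(1-\<mu>1*S) \<ge> 0" unfolding c1 using pos by simp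
  show "1/(l1-\<mu>1) - ((1/l1)*S)/(S - 1/l1) \<ge> 0" unfolding p using pos by simp
  have "(\<mu>1^2 * (1 - l1*S) / ((l1-\<mu>1)*(1-\<mu>1*S))) * ((1-\<mu>1*S) / ((l1-\<mu>1)*(1-l1*S))) = (1/(l1-\<mu>1)*\<mu>1)^2"
    using nz by (simp add: divide_simps; simp add: algebra_simps power2_eq_square)
  thus "(\<mu>1*(1 + 1/(l1-\<mu>1)*\<mu>1) - \<mu>1/(1-\<mu>1*S)) * (1/(l1-\<mu>1) - ((1/l1)*S)/(S - 1/l1)) \<ge> (1/(l1-\<mu>1)*\<mu>1)^2"
    unfolding c1 p by simp
qed

lemma c3f2:
  fixes l2 \<mu>1 \<mu>2 :: real
  assumes a: "l2 > \<mu>1" "\<mu>1 > - \<mu>2" "- \<mu>2 > 0"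
  defines "S \<equiv> 1/\<mu>1 + 1/\<mu>2 + 1/l2" and "\<beta> \<equiv> - \<mu>2/(l2+\<mu>2)"
  shows "\<mu>1/(1-\<mu>1*S) + (1+2*\<beta>)*\<mu>2*(1 + 1/(l2-\<mu>2)*\<mu>2) = 0"
    "(1+2*\<beta>)*(1/(l2-\<mu>2)) - 1/(l2+\<mu>2) = 0"
    "\<beta> + 1/(l2-\<mu>2)*\<mu>2 + 2*\<beta>*(1/(l2-\<mu>2))*\<mu>2 = 0"
    "\<beta> \<ge> 0"
proof -
  have nz: "l2 \<noteq> 0" "\<mu>1 \<noteq> 0" "\<mu>2 \<noteq> 0" "l2 + \<mu>2 \<noteq> 0" "l2 - \<mu>2 \<noteq> 0" using a by auto
  have e: "\<mu>1/(1-\<mu>1*S) = - \<mu>2*l2/(l2+\<mu>2)"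
  proof -
    have h1: "1 - \<mu>1*S = - \<mu>1*(l2+\<mu>2)/(\<mu>2*l2)" unfolding S_def using nz by (simp add: divide_simps; simp add: algebra_simps)
    show ?thesis unfolding h1 using nz by (simp add: divide_simps; simp add: algebra_simps)
  qed
  show "\<mu>1/(1-\<mu>1*S) + (1+2*\<beta>)*\<mu>2*(1 + 1/(l2-\<mu>2)*\<mu>2) = 0"
    unfolding e \<beta>_def using nz by (simp add: divide_simps; simp add: algebra_simps)
  show "(1+2*\<beta>)*(1/(l2-\<mu>2)) - 1/(l2+\<mu>2) = 0"
    unfolding \<beta>_def using nz by (simp add: divide_simps; simp add: algebra_simps)
  show "\<beta> + 1/(l2-\<mu>2)*\<mu>2 + 2*\<beta>*(1/(l2-\<mu>2))*\<mu>2 = 0"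
    unfolding \<beta>_def using nz by (simp add: divide_simps; simp add: algebra_simps)
  have "- \<mu>2/(l2+\<mu>2) \<ge> 0" using a by (intro divide_nonneg_pos) auto
  thus "\<beta> \<ge> 0" unfolding \<beta>_def .
qed

lemma c5f2:
  fixes l2 \<mu>1 \<mu>2 :: real
  assumes a: "l2 > 0" "\<mu>1 > - \<mu>2" "- \<mu>2 > 0" and S: "1/\<mu>1 + 1/\<mu>2 + 1/l2 > 0"
  defines "\<beta> \<equiv> - (\<mu>1+\<mu>2)/\<mu>2" and "k \<equiv> 1/(l2-\<mu>2)"
  shows "\<beta> \<ge> 0" "\<mu>1 + (1+2*\<beta>)*\<mu>2*(1 + k*\<mu>2) \<ge> 0"
    "(1+2*\<beta>)*k - (\<mu>1+\<mu>2)/\<mu>2^2 \<ge> 0"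
    "(\<mu>1 + (1+2*\<beta>)*\<mu>2*(1 + k*\<mu>2)) * ((1+2*\<beta>)*k - (\<mu>1+\<mu>2)/\<mu>2^2) \<ge> (\<beta> + k*\<mu>2 + 2*\<beta>*k*\<mu>2)^2"
proof -
  have nz: "l2 \<noteq> 0" "\<mu>1 \<noteq> 0" "\<mu>2 \<noteq> 0" "l2 - \<mu>2 \<noteq> 0" using a by auto
  define c where "c = \<mu>1 + (1+2*\<beta>)*\<mu>2*(1 + k*\<mu>2)"
  have ce: "c = - (\<mu>1*\<mu>2*l2) * (1/\<mu>1 + 1/\<mu>2 + 1/l2) / (l2 - \<mu>2)"
    unfolding c_def \<beta>_def k_def using nz by (simp add: divide_simps; simp add: algebra_simps)
  have c0: "c \<ge> 0"
  proof -
    have "\<mu>1*\<mu>2 < 0" using a mult_pos_neg[of \<mu>1 \<mu>2] by simp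
    hence "\<mu>1*\<mu>2*l2 < 0" using a mult_neg_pos by blast
    hence "- (\<mu>1*\<mu>2*l2) * (1/\<mu>1 + 1/\<mu>2 + 1/l2) \<ge> 0" using S by (intro mult_nonneg_nonneg) auto
    moreover have "l2 - \<mu>2 > 0" using a by simp
    ultimately have "- (\<mu>1*\<mu>2*l2) * (1/\<mu>1 + 1/\<mu>2 + 1/l2) / (l2 - \<mu>2) \<ge> 0" by (rule divide_nonneg_pos)
    thus ?thesis unfolding ce .
  qed
  have qe: "(1+2*\<beta>)*k - (\<mu>1+\<mu>2)/\<mu>2^2 = c / \<mu>2^2"
    unfolding c_def \<beta>_def k_def using nz by (simp add: divide_simps; simp add: algebra_simps power2_eq_square)
  have te: "\<beta> + k*\<mu>2 + 2*\<beta>*k*\<mu>2 = c / \<mu>2"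
    unfolding c_def \<beta>_def k_def using nz by (simp add: divide_simps; simp add: algebra_simps)
  show "\<beta> \<ge> 0" unfolding \<beta>_def using a by (simp add: divide_nonpos_neg)
  show "\<mu>1 + (1+2*\<beta>)*\<mu>2*(1 + k*\<mu>2) \<ge> 0" using c0 unfolding c_def .
  show "(1+2*\<beta>)*k - (\<mu>1+\<mu>2)/\<mu>2^2 \<ge> 0" unfolding qe using c0 by simp
  show "(\<mu>1 + (1+2*\<beta>)*\<mu>2*(1 + k*\<mu>2)) * ((1+2*\<beta>)*k - (\<mu>1+\<mu>2)/\<mu>2^2) \<ge> (\<beta> + k*\<mu>2 + 2*\<beta>*k*\<mu>2)^2"
    unfolding qe te c_def[symmetric] using nz by (simp add: power2_eq_square)
qed


lemma lim3a:
  assumes "a - 1/l1 \<noteq> (0::real)"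
  shows "Lim at_top (\<lambda>t::real. ((1/l1)*(a + 1/t))/((a + 1/t) - 1/l1)) = ((1/l1)*a)/(a - 1/l1)"
proof (rule tendsto_Lim)
  have "((\<lambda>t. ((1/l1)*(a + inverse t))/((a + inverse t) - 1/l1)) \<longlongrightarrow> ((1/l1)*(a + 0))/((a + 0) - 1/l1)) at_top"
    by (intro tendsto_intros inv_top) (use assms in simp)
  thus "((\<lambda>t::real. ((1/l1)*(a + 1/t))/((a + 1/t) - 1/l1)) \<longlongrightarrow> ((1/l1)*a)/(a - 1/l1)) at_top"
    by (simp add: inverse_eq_divide)
qed simp

lemma lim3b: "Lim at_top (\<lambda>t::real. 1/(t + \<mu>2)) = 0"
proof (rule tendsto_Lim)
  have "((\<lambda>t. inverse t / (1 + \<mu>2 * inverse t)) \<longlongrightarrow> 0 / (1 + \<mu>2 * 0)) at_top"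
    by (intro tendsto_intros inv_top) simp
  moreover have "eventually (\<lambda>t. inverse t / (1 + \<mu>2 * inverse t) = 1/(t + \<mu>2)) at_top"
    using eventually_gt_at_top[of "max 0 (- \<mu>2)"]
  proof eventually_elim
    case (elim t)
    hence "t \<noteq> 0" "t + \<mu>2 \<noteq> 0" by auto
    thus ?case by (simp add: divide_simps)
  qed
  ultimately have "((\<lambda>t::real. 1/(t + \<mu>2)) \<longlongrightarrow> 0 / (1 + \<mu>2 * 0)) at_top"
    by (rule Lim_transform_eventually)
  thus "((\<lambda>t::real. 1/(t + \<mu>2)) \<longlongrightarrow> 0) at_top" by simp
qed simp

lemma case3:
  fixes f1 f2 :: "'a::euclidean_space \<Rightarrow> real" and x xp g1 g2 g2p :: 'a
  assumes F1: "Fclass \<mu>1 L1 f1" and F2: "Fclass \<mu>2 L2 f2"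
    and m1: "ereal \<mu>1 < L1" and m2: "ereal \<mu>2 < L2"
    and h1x: "\<And>w. hf \<mu>1 f1 w \<ge> hf \<mu>1 f1 x + inner (g1 - \<mu>1 *\<^sub>R x) (w - x)"
    and h1p: "\<And>w. hf \<mu>1 f1 w \<ge> hf \<mu>1 f1 xp + inner (g2 - \<mu>1 *\<^sub>R xp) (w - xp)"
    and h2x: "\<And>w. hf \<mu>2 f2 w \<ge> hf \<mu>2 f2 x + inner (g2 - \<mu>2 *\<^sub>R x) (w - x)"
    and h2p: "\<And>w. hf \<mu>2 f2 w \<ge> hf \<mu>2 f2 xp + inner (g2p - \<mu>2 *\<^sub>R xp) (w - xp)"
    and notboth: "\<not> (L1 = \<infinity> \<and> L2 = \<infinity>)" and L1pos: "0 < L1"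
    and c: "\<mu>1 > - \<mu>2" "- \<mu>2 > 0" "ereal \<mu>1 < L2"
    and T: "inverse L1 * (2 + L2 / ereal \<mu>2) \<le> inverse (ereal \<mu>1) + inverse (ereal \<mu>2) + inverse L2"
    and S: "inverse (ereal \<mu>1) + inverse (ereal \<mu>2) + inverse L2 \<le> 0"
  shows "f1 x - f2 x - (f1 xp - f2 xp) \<ge>
      lim_ext (\<lambda>l1 l2. ((1 / l1) * (1/\<mu>1 + 1/\<mu>2 + 1/l2)) / ((1/\<mu>1 + 1/\<mu>2 + 1/l2) - 1 / l1)) L1 L2 / 2 * (norm (g1 - g2))^2
    + lim_ext (\<lambda>l1 l2. 1 / (l2 + \<mu>2)) L1 L2 / 2 * (norm (g2 - g2p))^2"
proof -
  have m1p: "\<mu>1 > 0" and m2n: "\<mu>2 < 0" using c by auto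
  have L2pos: "L2 > 0" using c(3) m1p by (metis ereal_less(2) less_trans zero_ereal_def)
  show ?thesis
  proof (cases "L2 = \<infinity>")
    case L2inf: True
    hence "L1 \<noteq> \<infinity>" using notboth by auto
    then obtain l1 where l1: "L1 = ereal l1" using L1pos by (cases L1) auto
    have l1p: "\<mu>1 < l1" using m1 unfolding l1 by simp
    define S0 where "S0 = 1/\<mu>1 + 1/\<mu>2"
    have "ereal S0 \<le> 0" using S m1p m2n unfolding L2inf S0_def by (simp add: inv_ereal_nz inverse_eq_divide)
    hence S0: "S0 \<le> 0" by simp
    have l1pos: "l1 > 0" using l1p m1p by simp
    have lima: "lim_ext (\<lambda>l1 l2. ((1 / l1) * (1/\<mu>1 + 1/\<mu>2 + 1/l2)) / ((1/\<mu>1 + 1/\<mu>2 + 1/l2) - 1 / l1)) L1 L2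
       = ((1/l1)*S0)/(S0 - 1/l1)"
    proof -
      have "S0 - 1/l1 \<noteq> 0" using S0 l1pos by (smt (verit) divide_pos_pos)
      thus ?thesis unfolding lim_ext_def l1 L2inf S0_def using lim3a by simp
    qed
    have limb: "lim_ext (\<lambda>l1 l2. 1 / (l2 + \<mu>2)) L1 L2 = 0"
      unfolding lim_ext_def l1 L2inf using lim3b by simp
    have e: "\<mu>1/(1-\<mu>1*S0) = - \<mu>2"
      unfolding S0_def using m1p m2n by (simp add: divide_simps; simp add: algebra_simps)
    have k1: "kap \<mu>1 L1 = 1/(l1 - \<mu>1)" unfolding l1 kap_fin ..
    have k2: "kap \<mu>2 L2 = 0" unfolding L2inf kap_inf ..
    note B1 = c3f1[OF l1p m1p S0, folded k1]
    have B2: "\<mu>1/(1-\<mu>1*S0) + (1+2*0) * \<mu>2 * (1 + kap \<mu>2 L2 * \<mu>2) \<ge> 0"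
      "(1+2*0)*kap \<mu>2 L2 - 0 \<ge> 0"
      "(\<mu>1/(1-\<mu>1*S0) + (1+2*0) * \<mu>2 * (1 + kap \<mu>2 L2 * \<mu>2)) * ((1+2*0)*kap \<mu>2 L2 - 0)
          \<ge> (0 + kap \<mu>2 L2*\<mu>2 + 2*0*kap \<mu>2 L2*\<mu>2)^2"
      unfolding e k2 by simp_all
    show ?thesis unfolding lima limb
      using G[OF F1 F2 m1 m2 h1x h1p h2x h2p _ B1 B2] by simp
  next
    case L2fin: False
    then obtain l2 where l2: "L2 = ereal l2" using L2pos by (cases L2) auto
    have l2p: "\<mu>1 < l2" using c(3) unfolding l2 by simp
    define S where "S = 1/\<mu>1 + 1/\<mu>2 + 1/l2"
    have l2pos: "l2 > 0" using l2p m1p by simp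
    have S1e: "inverse (ereal \<mu>1) + inverse (ereal \<mu>2) + inverse L2 = ereal S"
      unfolding l2 S_def using m1p m2n l2pos by (simp add: inv_ereal_nz inverse_eq_divide)
    have Sle: "S \<le> 0" using S unfolding S1e by simp
    define \<beta> where "\<beta> = - \<mu>2/(l2+\<mu>2)"
    note f2 = c3f2[OF l2p c(1,2), folded S_def \<beta>_def]
    have k2: "kap \<mu>2 L2 = 1/(l2 - \<mu>2)" unfolding l2 kap_fin ..
    have limb: "lim_ext (\<lambda>l1 l2. 1 / (l2 + \<mu>2)) L1 L2 = 1 / (l2 + \<mu>2)"
      unfolding lim_ext_def l2 by (simp add: Lim_const_top)
    show ?thesis
    proof (cases "L1 = \<infinity>")
      case L1inf: True
      have T0: "inverse L1 * (2 + L2 / ereal \<mu>2) = 0"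
        unfolding L1inf l2 using m2n by (simp add: divide_ereal_def inv_ereal_nz)
      have "0 \<le> S" using T[unfolded S1e T0] by simp
      hence S0: "S = 0" using Sle by simp
      have lima: "lim_ext (\<lambda>l1 l2. ((1 / l1) * (1/\<mu>1 + 1/\<mu>2 + 1/l2)) / ((1/\<mu>1 + 1/\<mu>2 + 1/l2) - 1 / l1)) L1 L2 = 0"
      proof -
        have "1/\<mu>1 + 1/\<mu>2 + 1/l2 = 0" using S0 unfolding S_def .
        thus ?thesis unfolding lim_ext_def L1inf l2 by (simp add: Lim_const_top)
      qed
      have B1: "\<mu>1 * (1 + kap \<mu>1 L1 * \<mu>1) - \<mu>1 \<ge> 0" "kap \<mu>1 L1 - 0 \<ge> 0"
          "(\<mu>1 * (1 + kap \<mu>1 L1 * \<mu>1) - \<mu>1) * (kap \<mu>1 L1 - 0) \<ge> (kap \<mu>1 L1 * \<mu>1)^2"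
        by (rule zeroB1[OF kap_nonneg[OF m1]])+
      have f2': "\<mu>1 + (1+2*\<beta>)*\<mu>2*(1 + 1/(l2-\<mu>2)*\<mu>2) = 0" using f2(1) unfolding S0 by simp
      have B2: "\<mu>1 + (1+2*\<beta>) * \<mu>2 * (1 + kap \<mu>2 L2 * \<mu>2) \<ge> 0" "(1+2*\<beta>)*kap \<mu>2 L2 - 1/(l2+\<mu>2) \<ge> 0"
         "(\<mu>1 + (1+2*\<beta>) * \<mu>2 * (1 + kap \<mu>2 L2 * \<mu>2)) * ((1+2*\<beta>)*kap \<mu>2 L2 - 1/(l2+\<mu>2))
          \<ge> (\<beta> + kap \<mu>2 L2*\<mu>2 + 2*\<beta>*kap \<mu>2 L2*\<mu>2)^2"
        unfolding k2 f2' f2(2) f2(3) by simp_all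
      show ?thesis unfolding lima limb
        using G[OF F1 F2 m1 m2 h1x h1p h2x h2p f2(4) B1 B2] by simp
    next
      case L1fin: False
      then obtain l1 where l1: "L1 = ereal l1" using L1pos by (cases L1) auto
      have l1p: "\<mu>1 < l1" using m1 unfolding l1 by simp
      have k1: "kap \<mu>1 L1 = 1/(l1 - \<mu>1)" unfolding l1 kap_fin ..
      have lima: "lim_ext (\<lambda>l1 l2. ((1 / l1) * (1/\<mu>1 + 1/\<mu>2 + 1/l2)) / ((1/\<mu>1 + 1/\<mu>2 + 1/l2) - 1 / l1)) L1 L2
         = ((1/l1)*S)/(S - 1/l1)"
        unfolding l1 l2 lim_ext_fin S_def ..
      note B1 = c3f1[OF l1p m1p Sle, folded k1]
      have B2: "\<mu>1/(1-\<mu>1*S) + (1+2*\<beta>) * \<mu>2 * (1 + kap \<mu>2 L2 * \<mu>2) \<ge> 0" "(1+2*\<beta>)*kap \<mu>2 L2 - 1/(l2+\<mu>2) \<ge> 0"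
         "(\<mu>1/(1-\<mu>1*S) + (1+2*\<beta>) * \<mu>2 * (1 + kap \<mu>2 L2 * \<mu>2)) * ((1+2*\<beta>)*kap \<mu>2 L2 - 1/(l2+\<mu>2))
          \<ge> (\<beta> + kap \<mu>2 L2*\<mu>2 + 2*\<beta>*kap \<mu>2 L2*\<mu>2)^2"
        unfolding k2 f2(1) f2(2) f2(3) by simp_all
      show ?thesis unfolding lima limb
        using G[OF F1 F2 m1 m2 h1x h1p h2x h2p f2(4) B1 B2] by simp
    qed
  qed
qed

lemma case5:
  fixes f1 f2 :: "'a::euclidean_space \<Rightarrow> real" and x xp g1 g2 g2p :: 'a
  assumes F1: "Fclass \<mu>1 L1 f1" and F2: "Fclass \<mu>2 L2 f2"
    and m1: "ereal \<mu>1 < L1" and m2: "ereal \<mu>2 < L2"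
    and h1x: "\<And>w. hf \<mu>1 f1 w \<ge> hf \<mu>1 f1 x + inner (g1 - \<mu>1 *\<^sub>R x) (w - x)"
    and h1p: "\<And>w. hf \<mu>1 f1 w \<ge> hf \<mu>1 f1 xp + inner (g2 - \<mu>1 *\<^sub>R xp) (w - xp)"
    and h2x: "\<And>w. hf \<mu>2 f2 w \<ge> hf \<mu>2 f2 x + inner (g2 - \<mu>2 *\<^sub>R x) (w - x)"
    and h2p: "\<And>w. hf \<mu>2 f2 w \<ge> hf \<mu>2 f2 xp + inner (g2p - \<mu>2 *\<^sub>R xp) (w - xp)"
    and L2pos: "0 < L2"
    and c: "\<mu>1 > - \<mu>2" "- \<mu>2 > 0"
    and S: "0 < inverse (ereal \<mu>1) + inverse (ereal \<mu>2) + inverse L2"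
  shows "f1 x - f2 x - (f1 xp - f2 xp) \<ge> 0/2 * (norm (g1 - g2))^2
    + (\<mu>1 + \<mu>2) / \<mu>2^2 / 2 * (norm (g2 - g2p))^2"
proof -
  have m1p: "\<mu>1 > 0" and m2n: "\<mu>2 < 0" using c by auto
  have L2fin: "L2 \<noteq> \<infinity>"
  proof
    assume L2inf: "L2 = \<infinity>"
    have "ereal (1/\<mu>1 + 1/\<mu>2) > 0" using S m1p m2n unfolding L2inf by (simp add: inv_ereal_nz inverse_eq_divide)
    hence "1/\<mu>1 + 1/\<mu>2 > 0" by simp
    moreover have "1/\<mu>1 < 1/(-\<mu>2)" by (rule frac_less2) (use c in auto)
    moreover have "1/(-\<mu>2) = - (1/\<mu>2)" by simp
    ultimately show False by linarith
  qed
  then obtain l2 where l2: "L2 = ereal l2" using L2pos by (cases L2) auto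
  have l2pos: "l2 > 0" using L2pos unfolding l2 by simp
  have S': "1/\<mu>1 + 1/\<mu>2 + 1/l2 > 0"
  proof -
    have "ereal (1/\<mu>1 + 1/\<mu>2 + 1/l2) > 0" using S m1p m2n l2pos unfolding l2 by (simp add: inv_ereal_nz inverse_eq_divide)
    thus ?thesis by simp
  qed
  have k2: "kap \<mu>2 L2 = 1/(l2 - \<mu>2)" unfolding l2 kap_fin ..
  note f2 = c5f2[OF l2pos c S', folded k2]
  have B1: "\<mu>1 * (1 + kap \<mu>1 L1 * \<mu>1) - \<mu>1 \<ge> 0" "kap \<mu>1 L1 - 0 \<ge> 0"
      "(\<mu>1 * (1 + kap \<mu>1 L1 * \<mu>1) - \<mu>1) * (kap \<mu>1 L1 - 0) \<ge> (kap \<mu>1 L1 * \<mu>1)^2"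
    by (rule zeroB1[OF kap_nonneg[OF m1]])+
  show ?thesis by (rule G[OF F1 F2 m1 m2 h1x h1p h2x h2p f2(1) B1 f2(2-4)])
qed

lemma lim_ext_swap:
  assumes "\<not> (L1 = \<infinity> \<and> L2 = \<infinity>)"
  shows "lim_ext \<phi> L2 L1 = lim_ext (\<lambda>a b. \<phi> b a) L1 L2"
  using assms unfolding lim_ext_def by auto

lemma case7m:
  fixes f1 f2 :: "'a::euclidean_space \<Rightarrow> real" and x xp g1 g2 g2p :: 'a
  assumes F1: "Fclass \<mu>1 L1 f1" and F2: "Fclass \<mu>2 L2 f2"
    and m1: "ereal \<mu>1 < L1" and m2: "ereal \<mu>2 < L2"
    and h1x: "\<And>w. hf \<mu>1 f1 w \<ge> hf \<mu>1 f1 x + inner (g1 - \<mu>1 *\<^sub>R x) (w - x)"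
    and h1p: "\<And>w. hf \<mu>1 f1 w \<ge> hf \<mu>1 f1 xp + inner (g2 - \<mu>1 *\<^sub>R xp) (w - xp)"
    and h2x: "\<And>w. hf \<mu>2 f2 w \<ge> hf \<mu>2 f2 x + inner (g2 - \<mu>2 *\<^sub>R x) (w - x)"
    and h2p: "\<And>w. hf \<mu>2 f2 w \<ge> hf \<mu>2 f2 xp + inner (g2p - \<mu>2 *\<^sub>R xp) (w - xp)"
    and c: "L2 < ereal \<mu>1" "0 < L2"
    and mu: "0 \<le> \<mu>2 \<or> (\<mu>2 < 0 \<and> inverse (ereal \<mu>1) + inverse (ereal \<mu>2) + inverse L2 \<le> 0)"
  shows "f1 x - f2 x - (f1 xp - f2 xp) \<ge> 0/2 * (norm (g1 - g2))^2
          + lim_ext (\<lambda>l1 l2. (l2 + \<mu>1) / l2^2) L1 L2 / 2 * (norm (g2 - g2p))^2"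
proof -
  obtain l2 where l2: "L2 = ereal l2" using c by (cases L2) auto
  have l2p: "l2 > 0" "l2 < \<mu>1" using c unfolding l2 by auto
  have lim: "lim_ext (\<lambda>l1 l2. (l2 + \<mu>1) / l2^2) L1 L2 = (l2 + \<mu>1) / l2^2"
    unfolding lim_ext_def l2 by (simp add: Lim_const_top)
  have mu': "0 \<le> \<mu>2 \<or> (\<mu>2 < 0 \<and> 0 < \<mu>1 \<and> inverse (ereal \<mu>1) + inverse (ereal \<mu>2) + inverse L2 \<le> 0)"
    using mu l2p by auto
  have m1n: "\<mu>1 \<ge> 0" using l2p by simp
  show ?thesis unfolding lim by (rule case7[OF F1 F2 m1 m2 h1x h1p h2x h2p l2 l2p(1) m1n mu'])
qed

theorem mainTheorem3:
  fixes f1 f2 :: "'a::euclidean_space \<Rightarrow> real"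
    and L1 L2 :: ereal and \<mu>1 \<mu>2 :: real
    and x xp g1 g2 g2p :: 'a
  assumes L1pos: "0 < L1" and L2pos: "0 < L2"
    and notboth: "\<not> (L1 = \<infinity> \<and> L2 = \<infinity>)"
    and mu1L1: "ereal \<mu>1 < L1" and mu2L2: "ereal \<mu>2 < L2"
    and musum: "\<mu>1 + \<mu>2 > 0 \<or> (\<mu>1 = 0 \<and> \<mu>2 = 0)"
    and f1F: "Fclass \<mu>1 L1 f1" and f2F: "Fclass \<mu>2 L2 f2"
    and bdd: "bdd_below (range (\<lambda>z. f1 z - f2 z))"
    and g2: "g2 \<in> subdiff \<mu>2 f2 x"
    and xp: "\<forall>w. f1 xp - inner g2 xp \<le> f1 w - inner g2 w"
    and g1: "g1 \<in> subdiff \<mu>1 f1 x"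
    and g2p: "g2p \<in> subdiff \<mu>2 f2 xp"
  defines "F \<equiv> (\<lambda>z. f1 z - f2 z)"
    and "S1 \<equiv> inverse (ereal \<mu>1) + inverse (ereal \<mu>2) + inverse L2"
    and "S2 \<equiv> inverse (ereal \<mu>1) + inverse (ereal \<mu>2) + inverse L1"
    and "T1 \<equiv> inverse L1 * (2 + L2 / ereal \<mu>2)"
    and "T2 \<equiv> inverse L2 * (2 + L1 / ereal \<mu>1)"
    and "bound \<equiv> (\<lambda>\<sigma> \<sigma>p. \<sigma> / 2 * (norm (g1 - g2))^2 + \<sigma>p / 2 * (norm (g2 - g2p))^2)"
  shows
   "(L2 \<le> L1 \<and> ereal \<mu>1 < L2 \<and> 0 \<le> \<mu>1 \<and>
       (0 \<le> \<mu>2 \<or> (\<mu>1 > - \<mu>2 \<and> - \<mu>2 > 0 \<and> S1 \<le> T1))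
     \<longrightarrow> F x - F xp \<ge> bound
           (lim_ext (\<lambda>l1 l2. (l2 - \<mu>1) / (l2 * (l1 - \<mu>1))) L1 L2)
           (lim_ext (\<lambda>l1 l2. (1 / l2) * (1 + \<mu>1 * (l1 - l2) / (l2 * (l1 - \<mu>1)))) L1 L2))
  \<and> (L1 \<le> L2 \<and> ereal \<mu>2 < L1 \<and> 0 \<le> \<mu>2 \<and>
       (0 \<le> \<mu>1 \<or> (\<mu>2 > - \<mu>1 \<and> - \<mu>1 > 0 \<and> S2 \<le> T2))
     \<longrightarrow> F x - F xp \<ge> bound
           (lim_ext (\<lambda>l1 l2. (1 / l1) * (1 + \<mu>2 * (l2 - l1) / (l1 * (l2 - \<mu>2)))) L1 L2)
           (lim_ext (\<lambda>l1 l2. (l1 - \<mu>2) / (l1 * (l2 - \<mu>2))) L1 L2))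
  \<and> (\<mu>1 > - \<mu>2 \<and> - \<mu>2 > 0 \<and> ereal \<mu>1 < L2 \<and> ereal \<mu>2 < L1 \<and> T1 \<le> S1 \<and> S1 \<le> 0
     \<longrightarrow> F x - F xp \<ge> bound
           (lim_ext (\<lambda>l1 l2. ((1 / l1) * (1/\<mu>1 + 1/\<mu>2 + 1/l2)) / ((1/\<mu>1 + 1/\<mu>2 + 1/l2) - 1 / l1)) L1 L2)
           (lim_ext (\<lambda>l1 l2. 1 / (l2 + \<mu>2)) L1 L2))
  \<and> (\<mu>2 > - \<mu>1 \<and> - \<mu>1 > 0 \<and> ereal \<mu>1 < L2 \<and> ereal \<mu>2 < L1 \<and> T2 \<le> S2 \<and> S2 \<le> 0
     \<longrightarrow> F x - F xp \<ge> bound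
           (lim_ext (\<lambda>l1 l2. 1 / (l1 + \<mu>1)) L1 L2)
           (lim_ext (\<lambda>l1 l2. ((1 / l2) * (1/\<mu>1 + 1/\<mu>2 + 1/l1)) / ((1/\<mu>1 + 1/\<mu>2 + 1/l1) - 1 / l2)) L1 L2))
  \<and> (\<mu>1 > - \<mu>2 \<and> - \<mu>2 > 0 \<and> ereal \<mu>2 < L1 \<and> max T1 0 < S1
     \<longrightarrow> F x - F xp \<ge> bound 0 ((\<mu>1 + \<mu>2) / \<mu>2^2))
  \<and> (\<mu>2 > - \<mu>1 \<and> - \<mu>1 > 0 \<and> ereal \<mu>1 < L2 \<and> max T2 0 < S2
     \<longrightarrow> F x - F xp \<ge> bound ((\<mu>1 + \<mu>2) / \<mu>1^2) 0)
  \<and> (ereal \<mu>1 < L1 \<and> L2 < ereal \<mu>1 \<and> 0 < L2 \<and> (0 \<le> \<mu>2 \<or> (\<mu>2 < 0 \<and> S1 \<le> 0))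
     \<longrightarrow> F x - F xp \<ge> bound 0 (lim_ext (\<lambda>l1 l2. (l2 + \<mu>1) / l2^2) L1 L2))
  \<and> (ereal \<mu>2 < L2 \<and> L1 < ereal \<mu>2 \<and> 0 < L1 \<and> (0 \<le> \<mu>1 \<or> (\<mu>1 < 0 \<and> S2 \<le> 0))
     \<longrightarrow> F x - F xp \<ge> bound (lim_ext (\<lambda>l1 l2. (l1 + \<mu>2) / l1^2) L1 L2) 0)"
proof -
  have h1x: "\<And>w. hf \<mu>1 f1 w \<ge> hf \<mu>1 f1 x + inner (g1 - \<mu>1 *\<^sub>R x) (w - x)"
    by (rule subg_h[OF f1F g1])
  have h2x: "\<And>w. hf \<mu>2 f2 w \<ge> hf \<mu>2 f2 x + inner (g2 - \<mu>2 *\<^sub>R x) (w - x)"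
    by (rule subg_h[OF f2F g2])
  have h2p: "\<And>w. hf \<mu>2 f2 w \<ge> hf \<mu>2 f2 xp + inner (g2p - \<mu>2 *\<^sub>R xp) (w - xp)"
    by (rule subg_h[OF f2F g2p])
  have glob: "\<forall>w. f1 w \<ge> f1 xp + inner g2 (w - xp)"
  proof
    fix w
    have "f1 xp - inner g2 xp \<le> f1 w - inner g2 w" using xp by blast
    thus "f1 w \<ge> f1 xp + inner g2 (w - xp)" by (simp add: inner_diff_right)
  qed
  have h1p: "\<And>w. hf \<mu>1 f1 w \<ge> hf \<mu>1 f1 xp + inner (g2 - \<mu>1 *\<^sub>R xp) (w - xp)"
    by (rule subg_h_global[OF f1F glob])
  have nb': "\<not> (L2 = \<infinity> \<and> L1 = \<infinity>)" using notboth by auto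
  have sw: "\<And>\<phi>. lim_ext \<phi> L2 L1 = lim_ext (\<lambda>a b. \<phi> b a) L1 L2" by (rule lim_ext_swap[OF notboth])
  have Sc: "inverse (ereal \<mu>2) + inverse (ereal \<mu>1) + inverse L1 = inverse (ereal \<mu>1) + inverse (ereal \<mu>2) + inverse L1"
    by (simp add: add.commute)
  have Fsw: "f2 xp - f1 xp - (f2 x - f1 x) = f1 x - f2 x - (f1 xp - f2 xp)" by simp
  have nsw: "norm (g2p - g2) = norm (g2 - g2p)" "norm (g2 - g1) = norm (g1 - g2)" by (simp_all add: norm_minus_commute)
  show ?thesis unfolding F_def bound_def S1_def S2_def T1_def T2_def
    apply (intro conjI impI)
    subgoal apply (elim conjE) apply (rule case1[OF f1F f2F mu1L1 mu2L2 h1x h1p h2x h2p notboth]) apply assumption+ done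
    subgoal premises p
    proof -
      have "f2 xp - f1 xp - (f2 x - f1 x) \<ge>
        lim_ext (\<lambda>l1 l2. (l2 - \<mu>2) / (l2 * (l1 - \<mu>2))) L2 L1 / 2 * (norm (g2p - g2))^2
      + lim_ext (\<lambda>l1 l2. (1 / l2) * (1 + \<mu>2 * (l1 - l2) / (l2 * (l1 - \<mu>2)))) L2 L1 / 2 * (norm (g2 - g1))^2"
        using p[folded Sc] apply (elim conjE) apply (rule case1[OF f2F f1F mu2L2 mu1L1 h2p h2x h1p h1x nb']) apply assumption+ done
      thus ?thesis unfolding Fsw nsw sw by simp
    qed
    subgoal apply (elim conjE) apply (rule case3[OF f1F f2F mu1L1 mu2L2 h1x h1p h2x h2p notboth L1pos]) apply assumption+ done
    subgoal premises p
    proof -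
      have "f2 xp - f1 xp - (f2 x - f1 x) \<ge>
        lim_ext (\<lambda>l1 l2. ((1 / l1) * (1/\<mu>2 + 1/\<mu>1 + 1/l2)) / ((1/\<mu>2 + 1/\<mu>1 + 1/l2) - 1 / l1)) L2 L1 / 2 * (norm (g2p - g2))^2
      + lim_ext (\<lambda>l1 l2. 1 / (l2 + \<mu>1)) L2 L1 / 2 * (norm (g2 - g1))^2"
        using p[folded Sc] apply (elim conjE) apply (rule case3[OF f2F f1F mu2L2 mu1L1 h2p h2x h1p h1x nb' L2pos]) apply assumption+ done
      moreover have "(1::real)/\<mu>2 + 1/\<mu>1 = 1/\<mu>1 + 1/\<mu>2" by simp
      ultimately show ?thesis unfolding Fsw nsw sw by simp
    qed
    subgoal premises p
    proof -
      have c: "\<mu>1 > - \<mu>2" "- \<mu>2 > 0" "0 < inverse (ereal \<mu>1) + inverse (ereal \<mu>2) + inverse L2"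
        using p by auto
      show ?thesis by (rule case5[OF f1F f2F mu1L1 mu2L2 h1x h1p h2x h2p L2pos c])
    qed
    subgoal premises p
    proof -
      have c: "\<mu>2 > - \<mu>1" "- \<mu>1 > 0" "0 < inverse (ereal \<mu>2) + inverse (ereal \<mu>1) + inverse L1"
        using p unfolding Sc by auto
      have "f2 xp - f1 xp - (f2 x - f1 x) \<ge> 0/2 * (norm (g2p - g2))^2
          + (\<mu>2 + \<mu>1) / \<mu>1^2 / 2 * (norm (g2 - g1))^2"
        by (rule case5[OF f2F f1F mu2L2 mu1L1 h2p h2x h1p h1x L1pos c])
      thus ?thesis unfolding Fsw nsw by (simp add: add.commute)
    qed
    subgoal apply (elim conjE) apply (rule case7m[OF f1F f2F mu1L1 mu2L2 h1x h1p h2x h2p]) apply assumption+ done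
    subgoal premises p
    proof -
      have "f2 xp - f1 xp - (f2 x - f1 x) \<ge> 0/2 * (norm (g2p - g2))^2
          + lim_ext (\<lambda>l1 l2. (l2 + \<mu>2) / l2^2) L2 L1 / 2 * (norm (g2 - g1))^2"
        using p[folded Sc] apply (elim conjE) apply (rule case7m[OF f2F f1F mu2L2 mu1L1 h2p h2x h1p h1x]) apply assumption+ done
      thus ?thesis unfolding Fsw nsw sw by simp
    qed
    done
qed

end
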